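(* Let $X$ be an uncountable Polish space. Then \[ \mathscr{L}_X(\mathsf{r})=\mathscr{L}_X(\mathcal{R})=\Sigma^1_1(X), \] where $\Sigma^1_1(X)$ is the family of all analytic subsets of $X$. Moreover, for every nonempty analytic set $C\subseteq X$ there exists a sequence $y=(y_{\{n,m\}})_{\{n,m\}\in[\omega]^2}\in X^{[\omega]^2}$ such that $C=\Lambda_y(\mathsf{r})=\Lambda_y(\mathcal{R})$.
   Context: $\omega$ denotes the set of nonnegative integers; $[D]^2$ is the family of 2-element subsets of $D$, $[D]^\omega$ the family of infinite subsets, $\mathrm{FIN}$ the finite subsets. The Ramsey map is $\mathsf{r}:[\omega]^\omega\to[[\omega]^2]^\omega$, $\mathsf{r}(D)=[D]^2$. The Ramsey ideal $\mathcal{R}$ on $[\omega]^2$ is the family of all $S\subseteq[\omega]^2$ such that $[D]^2\not\subseteq S$ for every infinite $D\subseteq\omega$. For a sequence $y:[\omega]^2\to X$ in a topological space $X$: $\eta\in X$ is an $\mathsf{r}$-limit point of $y$ if there is an infinite $D\subseteq\omega$ such that for every neighborhood $U$ of $\eta$ there is a finite $K\subseteq\omega$ with $y_{\{n,m\}}\in U$ for all $\{n,m\}\in[D\setminus K]^2$; $\Lambda_y(\mathsf{r})$ is the set of such points. $\eta$ is an $\mathcal{R}$-limit point of $y$ if there is $E\subseteq[\omega]^2$ with $E\notin\mathcal{R}$ such that the subsequence $(y_s)_{s\in E}$ converges to $\eta$ in the ordinary sense (for every neighborhood $U$ of $\eta$, $y_s\in U$ for all but finitely many $s\in E$); $\Lambda_y(\mathcal{R})$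 is the set of such points. $\mathscr{L}_X(\mathsf{r})=\{A\subseteq X:\exists y\in X^{[\omega]^2}\ A=\Lambda_y(\mathsf{r})\}\cup\{\emptyset\}$ and $\mathscr{L}_X(\mathcal{R})=\{A\subseteq X:\exists y\in X^{[\omega]^2}\ A=\Lambda_y(\mathcal{R})\}\cup\{\emptyset\}$. *)

theory Defs
  imports "HOL-Analysis.Analysis"
begin

text \<open>Two-element subsets of D, i.e. [D]^2. A sequence indexed by [omega]^2 is a
function on nat set; only its values on 2-element sets matter.\<close>
definition pairs2 :: "nat set \<Rightarrow> nat set set" where
  "pairs2 D = {s. s \<subseteq> D \<and> card s = 2}"

definition Ramsey_ideal :: "nat set set set" where
  "Ramsey_ideal = {S. S \<subseteq> pairs2 UNIV \<and> (\<forall>D. infinite D \<longrightarrow> \<not> pairs2 D \<subseteq> S)}"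

definition r_limit_points :: "(nat set \<Rightarrow> 'a::topological_space) \<Rightarrow> 'a set" where
  "r_limit_points y = {\<eta>. \<exists>D. infinite D \<and>
     (\<forall>U. open U \<and> \<eta> \<in> U \<longrightarrow> (\<exists>K. finite K \<and> (\<forall>s\<in>pairs2 (D - K). y s \<in> U)))}"

definition R_limit_points :: "(nat set \<Rightarrow> 'a::topological_space) \<Rightarrow> 'a set" where
  "R_limit_points y = {\<eta>. \<exists>E. E \<subseteq> pairs2 UNIV \<and> E \<notin> Ramsey_ideal \<and>
     (\<forall>U. open U \<and> \<eta> \<in> U \<longrightarrow> finite {s\<in>E. y s \<notin> U})}"

definition L_r :: "'a::topological_space set set" where
  "L_r = {A. \<exists>y. A = r_limit_points y} \<union> {{}}"

definition L_R :: "'a::topological_space set set" where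
  "L_R = {A. \<exists>y. A = R_limit_points y} \<union> {{}}"

definition analytic_set :: "'a::topological_space set \<Rightarrow> bool" where
  "analytic_set A \<longleftrightarrow> A = {} \<or> (\<exists>f::(nat \<Rightarrow> nat) \<Rightarrow> 'a. continuous_on UNIV f \<and> range f = A)"

end

theory Submission
  imports Defs "HOL-Library.Ramsey"
begin


lemma pairs2_iff: "s \<in> pairs2 D \<longleftrightarrow> (\<exists>a b. a \<in> D \<and> b \<in> D \<and> a \<noteq> b \<and> s = {a,b})"
  unfolding pairs2_def card_2_iff by auto

lemma pairs2_mono: "A \<subseteq> B \<Longrightarrow> pairs2 A \<subseteq> pairs2 B"
  unfolding pairs2_def by auto

lemma finite_pairs2: "finite A \<Longrightarrow> finite (pairs2 A)"
  unfolding pairs2_def by (rule finite_subset[of _ "Pow A"]) auto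

lemma open_cyl: "open {\<gamma>::nat\<Rightarrow>nat. \<forall>i<N. \<gamma> i = \<beta> i}"
proof -
  have "open {f::nat\<Rightarrow>nat. \<forall>i\<in>{..<N}. f (id i) \<in> {\<beta> i}}"
    by (rule product_topology_basis') (auto simp: open_discrete)
  moreover have "{f::nat\<Rightarrow>nat. \<forall>i\<in>{..<N}. f (id i) \<in> {\<beta> i}} = {\<gamma>. \<forall>i<N. \<gamma> i = \<beta> i}" by auto
  ultimately show ?thesis by simp
qed

lemma open_contains_cyl:
  assumes "open U" "(\<beta>::nat\<Rightarrow>nat) \<in> U"
  shows "\<exists>N. {\<gamma>. \<forall>i<N. \<gamma> i = \<beta> i} \<subseteq> U"
proof -
  have "openin (product_topology (\<lambda>i. euclidean) UNIV) U" using assms(1) unfolding open_fun_def .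
  from product_topology_open_contains_basis[OF this assms(2)] obtain X where
    X: "\<beta> \<in> (\<Pi>\<^sub>E i\<in>UNIV. X i)" "finite {i. X i \<noteq> topspace euclidean}" "(\<Pi>\<^sub>E i\<in>UNIV. X i) \<subseteq> U"
    by blast
  obtain N where N: "\<forall>i\<in>{i. X i \<noteq> UNIV}. i < N"
    using X(2) finite_nat_bounded[of "{i. X i \<noteq> UNIV}"] by (auto simp: lessThan_def)
  have "{\<gamma>. \<forall>i<N. \<gamma> i = \<beta> i} \<subseteq> (\<Pi>\<^sub>E i\<in>UNIV. X i)"
  proof
    fix \<gamma> assume g: "\<gamma> \<in> {\<gamma>. \<forall>i<N. \<gamma> i = \<beta> i}"
    have "\<gamma> i \<in> X i" for i
      using N X(1) g by (cases "i < N") (auto simp: PiE_iff)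
    then show "\<gamma> \<in> (\<Pi>\<^sub>E i\<in>UNIV. X i)" by (auto simp: PiE_iff)
  qed
  with X(3) show ?thesis by blast
qed

definition rconv :: "(nat set \<Rightarrow> 'a::topological_space) \<Rightarrow> nat set \<Rightarrow> 'a \<Rightarrow> bool" where
  "rconv y D \<eta> \<longleftrightarrow> (\<forall>U. open U \<and> \<eta> \<in> U \<longrightarrow> (\<exists>K. finite K \<and> (\<forall>s\<in>pairs2 (D - K). y s \<in> U)))"

definition fconv :: "(nat set \<Rightarrow> 'a::topological_space) \<Rightarrow> nat set \<Rightarrow> 'a \<Rightarrow> bool" where
  "fconv y D \<eta> \<longleftrightarrow> (\<forall>U. open U \<and> \<eta> \<in> U \<longrightarrow> finite {s\<in>pairs2 D. y s \<notin> U})"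

lemma r_limit_points_alt: "r_limit_points y = {\<eta>. \<exists>D. infinite D \<and> rconv y D \<eta>}"
  unfolding r_limit_points_def rconv_def by auto

lemma R_limit_points_alt: "R_limit_points y = {\<eta>. \<exists>D. infinite D \<and> fconv y D \<eta>}"
proof (intro set_eqI iffI)
  fix \<eta> assume "\<eta> \<in> R_limit_points y"
  then obtain E where E: "E \<subseteq> pairs2 UNIV" "E \<notin> Ramsey_ideal"
    "\<forall>U. open U \<and> \<eta> \<in> U \<longrightarrow> finite {s\<in>E. y s \<notin> U}"
    unfolding R_limit_points_def by blast
  then obtain D where D: "infinite D" "pairs2 D \<subseteq> E" unfolding Ramsey_ideal_def by blast
  have "fconv y D \<eta>" unfolding fconv_def
  proof (intro allI impI)
    fix U assume "open U \<and> \<eta> \<in> U"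
    with E(3) have "finite {s\<in>E. y s \<notin> U}" by blast
    then show "finite {s\<in>pairs2 D. y s \<notin> U}" by (rule finite_subset[rotated]) (use D in auto)
  qed
  with D show "\<eta> \<in> {\<eta>. \<exists>D. infinite D \<and> fconv y D \<eta>}" by blast
next
  fix \<eta> assume "\<eta> \<in> {\<eta>. \<exists>D. infinite D \<and> fconv y D \<eta>}"
  then obtain D where D: "infinite D" "fconv y D \<eta>" by blast
  have "pairs2 D \<subseteq> pairs2 UNIV" by (rule pairs2_mono) auto
  moreover have "pairs2 D \<notin> Ramsey_ideal" using D(1) unfolding Ramsey_ideal_def by blast
  ultimately show "\<eta> \<in> R_limit_points y" using D(2) unfolding R_limit_points_def fconv_def by blast
qed

lemma fconv_rconv:
  assumes "fconv y D \<eta>" shows "rconv y D \<eta>"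
  unfolding rconv_def
proof (intro allI impI)
  fix U assume U: "open U \<and> \<eta> \<in> U"
  let ?B = "{s\<in>pairs2 D. y s \<notin> U}"
  have fB: "finite ?B" using assms U unfolding fconv_def by blast
  have "\<forall>s\<in>?B. finite s" by (auto simp: pairs2_iff)
  then have fK: "finite (\<Union>?B)" using fB by blast
  have H: "\<forall>s\<in>pairs2 (D - \<Union>?B). y s \<in> U"
  proof
    fix s assume s: "s \<in> pairs2 (D - \<Union>?B)"
    then obtain a b where ab: "a \<in> D - \<Union>?B" "b \<in> D - \<Union>?B" "a \<noteq> b" "s = {a,b}"
      by (auto simp: pairs2_iff)
    show "y s \<in> U"
    proof (rule ccontr)
      assume "y s \<notin> U"
      then have "s \<in> ?B" using ab by (auto simp: pairs2_iff)
      then show False using ab by blast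
    qed
  qed
  show "\<exists>K. finite K \<and> (\<forall>s\<in>pairs2 (D - K). y s \<in> U)"
    by (rule exI[of _ "\<Union>?B"]) (use fK H in simp)
qed

lemma R_sub_r: "R_limit_points y \<subseteq> r_limit_points y"
  unfolding R_limit_points_alt r_limit_points_alt using fconv_rconv by blast

lemma rconv_mono: "rconv y D \<eta> \<Longrightarrow> D' \<subseteq> D \<Longrightarrow> rconv y D' \<eta>"
  unfolding rconv_def
  by (meson Diff_mono order_refl pairs2_mono subsetD)

lemma infinite_two:
  assumes "infinite A" obtains a b where "a \<in> A" "b \<in> A" "a \<noteq> b"
proof -
  obtain a where a: "a \<in> A" using assms by (metis finite.emptyI ex_in_conv)
  have "infinite (A - {a})" using assms by simp
  then obtain b where "b \<in> A - {a}" by (metis finite.emptyI ex_in_conv)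
  with a that show ?thesis by blast
qed

lemma rconv_unique:
  fixes y :: "nat set \<Rightarrow> 'a::t2_space"
  assumes "infinite D" "rconv y D a" "rconv y D b" shows "a = b"
proof (rule ccontr)
  assume "a \<noteq> b"
  then obtain U V where UV: "open U" "open V" "a \<in> U" "b \<in> V" "U \<inter> V = {}"
    using hausdorff[OF \<open>a \<noteq> b\<close>] by auto
  obtain K1 where K1: "finite K1" "\<forall>s\<in>pairs2 (D - K1). y s \<in> U" using assms(2) UV(1,3) unfolding rconv_def by auto
  obtain K2 where K2: "finite K2" "\<forall>s\<in>pairs2 (D - K2). y s \<in> V" using assms(3) UV(2,4) unfolding rconv_def by auto
  have "infinite (D - (K1 \<union> K2))" using assms(1) K1 K2 by simp
  then obtain p q where pq: "p \<in> D - (K1 \<union> K2)" "q \<in> D - (K1 \<union> K2)" "p \<noteq> q" by (rule infinite_two)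
  have "{p,q} \<in> pairs2 (D - K1)" "{p,q} \<in> pairs2 (D - K2)" using pq by (auto simp: pairs2_iff)
  then have "y {p,q} \<in> U" "y {p,q} \<in> V" using K1 K2 by auto
  with UV show False by blast
qed



definition uL :: "nat \<Rightarrow> nat list" where "uL = from_nat_into (UNIV :: nat list set)"
definition cL :: "nat list \<Rightarrow> nat" where "cL = to_nat_on (UNIV :: nat list set)"

lemma uL_cL[simp]: "uL (cL l) = l"
  unfolding uL_def cL_def by simp

lemma inj_uL: "inj uL"
  unfolding uL_def using bij_betw_from_nat_into[of "UNIV :: nat list set"]
  by (simp add: bij_betw_def infinite_UNIV_listI)

definition pre :: "nat \<Rightarrow> (nat \<Rightarrow> nat) \<Rightarrow> nat list" where
  "pre n \<gamma> = map \<gamma> [0..<n]"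

lemma length_pre[simp]: "length (pre n \<gamma>) = n" unfolding pre_def by simp
lemma nth_pre[simp]: "i < n \<Longrightarrow> pre n \<gamma> ! i = \<gamma> i" unfolding pre_def by simp
lemma take_pre: "i \<le> n \<Longrightarrow> take i (pre n \<gamma>) = pre i \<gamma>"
  unfolding pre_def by (simp add: take_map)
lemma pre_Suc: "pre (Suc n) \<gamma> = pre n \<gamma> @ [\<gamma> n]" unfolding pre_def by simp
lemma pre_eq_iff: "pre n \<gamma> = pre n \<delta> \<longleftrightarrow> (\<forall>i<n. \<gamma> i = \<delta> i)"
  unfolding pre_def by auto

definition pref :: "nat list \<Rightarrow> nat list \<Rightarrow> bool" where
  "pref l m \<longleftrightarrow> take (length l) m = l"

definition extL :: "nat list \<Rightarrow> nat \<Rightarrow> nat" where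
  "extL l = (\<lambda>k. if k < length l then l ! k else 0)"

definition W :: "nat \<Rightarrow> nat \<Rightarrow> nat \<Rightarrow> nat" where
  "W a b = (if pref (uL a) (uL b) then extL (uL b) else if pref (uL b) (uL a) then extL (uL a) else (\<lambda>_. 0))"

lemma pref_antisym: "pref l m \<Longrightarrow> pref m l \<Longrightarrow> l = m"
  unfolding pref_def by (metis length_take min.absorb_iff2 nle_le take_all)

lemma W_sym: "W a b = W b a"
  unfolding W_def by (auto dest: pref_antisym)

definition ycon :: "((nat \<Rightarrow> nat) \<Rightarrow> 'a) \<Rightarrow> nat set \<Rightarrow> 'a" where
  "ycon f s = f (W (Min s) (Max s))"

lemma ycon_pair: "ycon f {a,b} = f (W a b)"
  unfolding ycon_def by (cases "a \<le> b") (auto simp: W_sym max_def min_def)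

lemma cyl_vimage:
  assumes "continuous_on UNIV (f :: (nat \<Rightarrow> nat) \<Rightarrow> 'a::topological_space)" "open U" "f \<beta> \<in> U"
  shows "\<exists>N. \<forall>\<gamma>. (\<forall>i<N. \<gamma> i = \<beta> i) \<longrightarrow> f \<gamma> \<in> U"
proof -
  have "open (f -` U)" using continuous_on_open_vimage[of UNIV f] assms by auto
  moreover have "\<beta> \<in> f -` U" using assms(3) by simp
  ultimately obtain N where N: "{\<gamma>. \<forall>i<N. \<gamma> i = \<beta> i} \<subseteq> f -` U"
    using open_contains_cyl by metis
  show ?thesis
  proof (intro exI[of _ N] allI impI)
    fix \<gamma> :: "nat \<Rightarrow> nat" assume "\<forall>i<N. \<gamma> i = \<beta> i"
    then have "\<gamma> \<in> {\<gamma>. \<forall>i<N. \<gamma> i = \<beta> i}" by simp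
    with N show "f \<gamma> \<in> U" by blast
  qed
qed

lemma part1a:
  assumes "continuous_on UNIV (f :: (nat \<Rightarrow> nat) \<Rightarrow> 'a::topological_space)"
  shows "f \<beta> \<in> R_limit_points (ycon f)"
proof -
  define d where "d j = cL (pre j \<beta>)" for j
  have ud: "uL (d j) = pre j \<beta>" for j unfolding d_def by simp
  have "inj d"
  proof
    fix i j assume "d i = d j"
    then have "pre i \<beta> = pre j \<beta>" using ud by metis
    then show "i = j" by (metis length_pre)
  qed
  then have infD: "infinite (range d)" by (simp add: range_inj_infinite)
  have Wd: "W (d i) (d j) = extL (pre (max i j) \<beta>)" for i j
  proof (cases "i \<le> j")
    case True
    then have "pref (uL (d i)) (uL (d j))" unfolding ud pref_def by (simp add: take_pre)
    then show ?thesis using True unfolding W_def by (simp add: ud max_def)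
  next
    case False
    then have "pref (uL (d j)) (uL (d i))" unfolding ud pref_def by (simp add: take_pre)
    then have "W (d j) (d i) = extL (pre (max i j) \<beta>)"
      using False unfolding W_def by (simp add: ud max_def)
    then show ?thesis by (simp add: W_sym)
  qed
  have "fconv (ycon f) (range d) (f \<beta>)"
    unfolding fconv_def
  proof (intro allI impI)
    fix U assume U: "open U \<and> f \<beta> \<in> U"
    then obtain N where N: "\<And>\<gamma>. (\<forall>i<N. \<gamma> i = \<beta> i) \<Longrightarrow> f \<gamma> \<in> U"
      using cyl_vimage[OF assms] by blast
    have "{s \<in> pairs2 (range d). ycon f s \<notin> U} \<subseteq> pairs2 (d ` {..<N})"
    proof
      fix s assume s: "s \<in> {s \<in> pairs2 (range d). ycon f s \<notin> U}"
      then obtain i j where ij: "s = {d i, d j}" "d i \<noteq> d j"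
        by (auto simp: pairs2_iff)
      have "f (W (d i) (d j)) \<notin> U" using s ij by (simp add: ycon_pair)
      then have "\<not> (max i j \<ge> N)" using N[of "W (d i) (d j)"] unfolding Wd extL_def
        by auto
      then have "i < N" "j < N" by auto
      then show "s \<in> pairs2 (d ` {..<N})" using ij unfolding pairs2_iff by blast
    qed
    then show "finite {s \<in> pairs2 (range d). ycon f s \<notin> U}"
      by (rule finite_subset) (simp add: finite_pairs2)
  qed
  then show ?thesis unfolding R_limit_points_alt using infD by blast
qed



lemma rconv_ycon_const:
  assumes "\<forall>a\<in>Y. \<forall>b\<in>Y. a \<noteq> b \<longrightarrow> W a b = c"
  shows "rconv (ycon f) Y (f c)"
  unfolding rconv_def
proof (intro allI impI)
  fix U assume U: "open U \<and> f c \<in> U"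
  have "\<forall>s\<in>pairs2 (Y - {}). ycon f s \<in> U"
    using assms U by (auto simp: pairs2_iff ycon_pair)
  then show "\<exists>K. finite K \<and> (\<forall>s\<in>pairs2 (Y - K). ycon f s \<in> U)" by blast
qed

lemma part1b:
  fixes f :: "(nat \<Rightarrow> nat) \<Rightarrow> 'a::t2_space"
  assumes cont: "continuous_on UNIV f" and eta: "\<eta> \<in> r_limit_points (ycon f)"
  shows "\<eta> \<in> range f"
proof -
  obtain D where D: "infinite D" "rconv (ycon f) D \<eta>" using eta unfolding r_limit_points_alt by blast
  define col where "col s = (if \<exists>a\<in>s. \<exists>b\<in>s. \<not> (pref (uL a) (uL b) \<or> pref (uL b) (uL a)) then 1 else (0::nat))" for s
  have "\<forall>x\<in>D. \<forall>y\<in>D. x \<noteq> y \<longrightarrow> col {x, y} < 2" unfolding col_def by auto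
  from Ramsey2[OF D(1) this] obtain Y t where Y: "Y \<subseteq> D" "infinite Y" "t < 2"
    "\<forall>x\<in>Y. \<forall>y\<in>Y. x\<noteq>y \<longrightarrow> col {x, y} = t" by blast
  have rY: "rconv (ycon f) Y \<eta>" using rconv_mono[OF D(2) Y(1)] .
  show ?thesis
  proof (cases "t = 1")
    case True
    have "\<forall>a\<in>Y. \<forall>b\<in>Y. a \<noteq> b \<longrightarrow> W a b = (\<lambda>_. 0)"
    proof (intro ballI impI)
      fix a b assume ab: "a \<in> Y" "b \<in> Y" "a \<noteq> b"
      then have "col {a,b} = 1" using Y(4) True by blast
      then have "\<not> pref (uL a) (uL b)" "\<not> pref (uL b) (uL a)"
        unfolding col_def by (auto simp: pref_def split: if_splits)
      then show "W a b = (\<lambda>_. 0)" unfolding W_def by simp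
    qed
    from rconv_ycon_const[OF this] have "rconv (ycon f) Y (f (\<lambda>_. 0))" .
    with rconv_unique[OF Y(2) rY] show ?thesis by blast
  next
    case False
    then have t0: "t = 0" using Y(3) by auto
    have comp: "pref (uL a) (uL b) \<or> pref (uL b) (uL a)" if "a \<in> Y" "b \<in> Y" for a b
    proof (cases "a = b")
      case True then show ?thesis by (simp add: pref_def)
    next
      case False
      then have "col {a,b} = 0" using Y(4) t0 that by blast
      then show ?thesis unfolding col_def by (auto simp: pref_def split: if_splits)
    qed
    have injl: "inj_on (\<lambda>d. length (uL d)) Y"
    proof
      fix a b assume ab: "a \<in> Y" "b \<in> Y" "length (uL a) = length (uL b)"
      then have "uL a = uL b" using comp[OF ab(1,2)] unfolding pref_def by auto
      then show "a = b" using inj_uL by (simp add: inj_eq)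
    qed
    have finK: "finite {d\<in>Y. length (uL d) \<le> N}" for N
    proof -
      have "(\<lambda>d. length (uL d)) ` {d\<in>Y. length (uL d) \<le> N} \<subseteq> {..N}" by auto
      then have "finite ((\<lambda>d. length (uL d)) ` {d\<in>Y. length (uL d) \<le> N})"
        using finite_subset by blast
      moreover have "inj_on (\<lambda>d. length (uL d)) {d\<in>Y. length (uL d) \<le> N}"
        using injl by (rule inj_on_subset) auto
      ultimately show ?thesis using finite_image_iff by blast
    qed
    have ex: "\<exists>d\<in>Y. length (uL d) > k" for k
    proof (rule ccontr)
      assume "\<not> ?thesis"
      then have "Y = {d\<in>Y. length (uL d) \<le> k}" by auto
      with finK[of k] Y(2) show False by simp
    qed
    define \<beta> where "\<beta> k = uL (SOME d. d \<in> Y \<and> length (uL d) > k) ! k" for k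
    have agree: "uL d ! k = \<beta> k" if "d \<in> Y" "k < length (uL d)" for d k
    proof -
      define d' where "d' = (SOME d. d \<in> Y \<and> length (uL d) > k)"
      have d': "d' \<in> Y" "length (uL d') > k" unfolding d'_def using someI_ex[OF ex[of k, unfolded Bex_def]] by auto
      have "uL d ! k = uL d' ! k"
        using comp[OF that(1) d'(1)] that(2) d'(2) unfolding pref_def
        by (metis nth_take)
      then show ?thesis unfolding \<beta>_def d'_def by simp
    qed
    have "rconv (ycon f) Y (f \<beta>)"
      unfolding rconv_def
    proof (intro allI impI)
      fix U assume U: "open U \<and> f \<beta> \<in> U"
      then obtain N where N: "\<And>\<gamma>. (\<forall>i<N. \<gamma> i = \<beta> i) \<Longrightarrow> f \<gamma> \<in> U"
        using cyl_vimage[OF cont] by blast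
      have "\<forall>s\<in>pairs2 (Y - {d\<in>Y. length (uL d) \<le> N}). ycon f s \<in> U"
      proof
        fix s assume "s \<in> pairs2 (Y - {d\<in>Y. length (uL d) \<le> N})"
        then obtain a b where ab: "a \<in> Y" "b \<in> Y" "length (uL a) > N" "length (uL b) > N" "s = {a,b}"
          by (auto simp: pairs2_iff)
        have ext_ok: "\<forall>i<N. extL (uL c) i = \<beta> i" if "c \<in> Y" "length (uL c) > N" for c
          using agree that unfolding extL_def by auto
        have "\<forall>i<N. W a b i = \<beta> i"
          using comp[OF ab(1,2)] ext_ok[OF ab(1,3)] ext_ok[OF ab(2,4)] unfolding W_def by auto
        then show "ycon f s \<in> U" using N ab(5) by (simp add: ycon_pair)
      qed
      then show "\<exists>K. finite K \<and> (\<forall>s\<in>pairs2 (Y - K). ycon f s \<in> U)" using finK[of N] by blast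
    qed
    with rconv_unique[OF Y(2) rY] show ?thesis by blast
  qed
qed

lemma part1:
  fixes f :: "(nat \<Rightarrow> nat) \<Rightarrow> 'a::t2_space"
  assumes cont: "continuous_on UNIV f"
  shows "r_limit_points (ycon f) = range f" "R_limit_points (ycon f) = range f"
proof -
  have a: "range f \<subseteq> R_limit_points (ycon f)" using part1a[OF cont] by blast
  have b: "r_limit_points (ycon f) \<subseteq> range f" using part1b[OF cont] by blast
  show "r_limit_points (ycon f) = range f" "R_limit_points (ycon f) = range f"
    using a b R_sub_r[of "ycon f"] by auto
qed



fun Gs :: "(nat list \<Rightarrow> bool) \<Rightarrow> (nat \<Rightarrow> nat) \<Rightarrow> nat \<Rightarrow> nat list" where
  "Gs E \<alpha> 0 = []"
| "Gs E \<alpha> (Suc k) = (if E (Gs E \<alpha> k @ [\<alpha> k]) then Gs E \<alpha> k @ [\<alpha> k] else Gs E \<alpha> k @ [SOME n. E (Gs E \<alpha> k @ [n])])"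

lemma Gs_snoc: "\<exists>x. Gs E \<alpha> (Suc k) = Gs E \<alpha> k @ [x]"
  by simp

lemma length_Gs[simp]: "length (Gs E \<alpha> k) = k"
  by (induction k) auto

lemma Gs_E:
  assumes "E []" "\<And>s. E s \<Longrightarrow> \<exists>n. E (s @ [n])"
  shows "E (Gs E \<alpha> k)"
proof (induction k)
  case 0 then show ?case using assms(1) by simp
next
  case (Suc k)
  then show ?case using assms(2)[OF Suc] by (auto intro: someI_ex)
qed

lemma Gs_local: "(\<forall>i<k. \<alpha> i = \<beta> i) \<Longrightarrow> Gs E \<alpha> k = Gs E \<beta> k"
  by (induction k) auto

definition rr :: "(nat list \<Rightarrow> bool) \<Rightarrow> (nat \<Rightarrow> nat) \<Rightarrow> nat \<Rightarrow> nat" where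
  "rr E \<alpha> = (\<lambda>k. Gs E \<alpha> (Suc k) ! k)"

lemma pre_rr: "pre k (rr E \<alpha>) = Gs E \<alpha> k"
proof (induction k)
  case 0 then show ?case by (simp add: pre_def)
next
  case (Suc k)
  obtain x where x: "Gs E \<alpha> (Suc k) = Gs E \<alpha> k @ [x]" using Gs_snoc by blast
  have "rr E \<alpha> k = x" unfolding rr_def x by (simp add: nth_append)
  then show ?case using Suc x by (simp add: pre_Suc)
qed

lemma Gs_fix: "(\<And>k. E (pre (Suc k) \<alpha>)) \<Longrightarrow> Gs E \<alpha> k = pre k \<alpha>"
proof (induction k)
  case 0 then show ?case by (simp add: pre_def)
next
  case (Suc k)
  then show ?case by (simp add: pre_Suc)
qed

lemma retract_image:
  fixes F :: "(nat \<Rightarrow> nat) set" and h :: "(nat \<Rightarrow> nat) \<Rightarrow> 'a::metric_space"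
  assumes ne: "F \<noteq> {}"
    and closedF: "\<And>\<gamma>. (\<forall>n. \<exists>\<delta>\<in>F. pre n \<delta> = pre n \<gamma>) \<Longrightarrow> \<gamma> \<in> F"
    and modul: "\<And>e. e > 0 \<Longrightarrow> \<exists>N. \<forall>\<gamma>\<in>F. \<forall>\<delta>\<in>F. pre N \<gamma> = pre N \<delta> \<longrightarrow> dist (h \<gamma>) (h \<delta>) < e"
  shows "\<exists>g::(nat\<Rightarrow>nat)\<Rightarrow>'a. continuous_on UNIV g \<and> range g = h ` F"
proof -
  define E where "E s \<longleftrightarrow> (\<exists>\<delta>\<in>F. pre (length s) \<delta> = s)" for s
  have E0: "E []" using ne unfolding E_def by (auto simp: pre_def)
  have E1: "\<exists>n. E (s @ [n])" if "E s" for s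
  proof -
    from that obtain \<delta> where d: "\<delta> \<in> F" "pre (length s) \<delta> = s" unfolding E_def by blast
    then have "pre (length (s @ [\<delta> (length s)])) \<delta> = s @ [\<delta> (length s)]" by (simp add: pre_Suc)
    with d(1) show ?thesis unfolding E_def by blast
  qed
  have rF: "rr E \<alpha> \<in> F" for \<alpha>
  proof (rule closedF, intro allI)
    fix n
    have "E (Gs E \<alpha> n)" using Gs_E[of E, OF E0 E1] by blast
    then obtain \<delta> where "\<delta> \<in> F" "pre n \<delta> = Gs E \<alpha> n" unfolding E_def by auto
    then show "\<exists>\<delta>\<in>F. pre n \<delta> = pre n (rr E \<alpha>)" by (auto simp: pre_rr)
  qed
  have rfix: "rr E \<gamma> = \<gamma>" if "\<gamma> \<in> F" for \<gamma>
  proof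
    fix k
    have "E (pre (Suc k) \<gamma>)" for k unfolding E_def using that by auto
    then have "Gs E \<gamma> (Suc k) = pre (Suc k) \<gamma>" by (rule Gs_fix)
    then show "rr E \<gamma> k = \<gamma> k" unfolding rr_def by simp
  qed
  define g where "g = h \<circ> rr E"
  have R: "range g = h ` F"
  proof
    show "range g \<subseteq> h ` F" unfolding g_def using rF by auto
    show "h ` F \<subseteq> range g"
    proof
      fix x assume "x \<in> h ` F"
      then obtain \<gamma> where "\<gamma> \<in> F" "x = h \<gamma>" by blast
      then have "x = g \<gamma>" unfolding g_def using rfix by simp
      then show "x \<in> range g" by blast
    qed
  qed
  have C: "continuous_on UNIV g"
    unfolding continuous_on_topological
  proof (intro ballI allI impI)
    fix \<alpha> :: "nat \<Rightarrow> nat" and B assume B: "open B" "g \<alpha> \<in> B"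
    then obtain e where e: "e > 0" "ball (g \<alpha>) e \<subseteq> B" by (rule openE)
    obtain N where N: "\<forall>\<gamma>\<in>F. \<forall>\<delta>\<in>F. pre N \<gamma> = pre N \<delta> \<longrightarrow> dist (h \<gamma>) (h \<delta>) < e"
      using modul[OF e(1)] by blast
    show "\<exists>A. open A \<and> \<alpha> \<in> A \<and> (\<forall>y\<in>UNIV. y \<in> A \<longrightarrow> g y \<in> B)"
    proof (intro exI conjI ballI impI)
      show "open {\<gamma>::nat\<Rightarrow>nat. \<forall>i<N. \<gamma> i = \<alpha> i}" by (rule open_cyl)
      show "\<alpha> \<in> {\<gamma>::nat\<Rightarrow>nat. \<forall>i<N. \<gamma> i = \<alpha> i}" by simp
      fix \<beta> assume "\<beta> \<in> {\<gamma>::nat\<Rightarrow>nat. \<forall>i<N. \<gamma> i = \<alpha> i}"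
      then have "Gs E \<beta> N = Gs E \<alpha> N" using Gs_local[of N \<beta> \<alpha> E] by simp
      then have "pre N (rr E \<alpha>) = pre N (rr E \<beta>)" by (simp add: pre_rr)
      then have "dist (h (rr E \<alpha>)) (h (rr E \<beta>)) < e" using N rF by blast
      then have "g \<beta> \<in> ball (g \<alpha>) e" unfolding g_def by simp
      then show "g \<beta> \<in> B" using e(2) by blast
    qed
  qed
  show ?thesis by (rule exI[of _ g]) (rule conjI[OF C R])
qed



lemma half_pow_small: "(e::real) > 0 \<Longrightarrow> \<exists>N. (1/2::real)^N < e"
proof -
  assume e: "e > 0"
  have "(\<lambda>n. (1/2::real)^n) \<longlonglongrightarrow> 0" by (rule LIMSEQ_power_zero) simp
  from order_tendstoD(2)[OF this e] show ?thesis
    by (auto simp: eventually_sequentially)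
qed

lemma half_pow_mono: "m \<le> n \<Longrightarrow> (1/2::real)^n \<le> (1/2)^m"
  by (rule power_decreasing) auto

definition Pc :: "(nat \<Rightarrow> nat \<Rightarrow> nat) \<Rightarrow> (nat set \<Rightarrow> 'a::metric_space) \<Rightarrow> (nat \<Rightarrow> nat) \<Rightarrow> bool" where
  "Pc \<rho> y \<gamma> \<longleftrightarrow> strict_mono \<gamma> \<and>
     (\<forall>i j k l. i < j \<longrightarrow> k < l \<longrightarrow> dist (y {\<gamma> i, \<gamma> j}) (y {\<gamma> k, \<gamma> l}) \<le> (1/2)^(min (\<rho> i j) (\<rho> k l)))"

definition zz :: "(nat set \<Rightarrow> 'a) \<Rightarrow> (nat \<Rightarrow> nat) \<Rightarrow> nat \<Rightarrow> 'a" where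
  "zz y \<gamma> n = y {\<gamma> n, \<gamma> (Suc n)}"

definition hl :: "(nat set \<Rightarrow> 'a::metric_space) \<Rightarrow> (nat \<Rightarrow> nat) \<Rightarrow> 'a" where
  "hl y \<gamma> = lim (zz y \<gamma>)"

lemma Pc_lim:
  fixes y :: "nat set \<Rightarrow> 'a::complete_space"
  assumes hr: "\<And>n. n \<le> \<rho> n (Suc n)" and P: "Pc \<rho> y \<gamma>"
  shows "zz y \<gamma> \<longlonglongrightarrow> hl y \<gamma>"
    and "\<And>i j. i < j \<Longrightarrow> dist (y {\<gamma> i, \<gamma> j}) (hl y \<gamma>) \<le> (1/2)^(\<rho> i j)"
proof -
  have d: "dist (y {\<gamma> i, \<gamma> j}) (zz y \<gamma> n) \<le> (1/2)^(min (\<rho> i j) n)" if "i < j" for i j n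
  proof -
    have "dist (y {\<gamma> i, \<gamma> j}) (zz y \<gamma> n) \<le> (1/2)^(min (\<rho> i j) (\<rho> n (Suc n)))"
      using P that unfolding Pc_def zz_def by auto
    also have "\<dots> \<le> (1/2)^(min (\<rho> i j) n)"
      by (rule half_pow_mono) (use hr[of n] in auto)
    finally show ?thesis .
  qed
  have "Cauchy (zz y \<gamma>)"
  proof (rule metric_CauchyI)
    fix e :: real assume "e > 0"
    then obtain M where M: "(1/2::real)^M < e" using half_pow_small by blast
    show "\<exists>M. \<forall>m\<ge>M. \<forall>n\<ge>M. dist (zz y \<gamma> m) (zz y \<gamma> n) < e"
    proof (intro exI allI impI)
      fix m n assume mn: "M \<le> m" "M \<le> n"
      have "dist (zz y \<gamma> m) (zz y \<gamma> n) \<le> (1/2)^(min (\<rho> m (Suc m)) n)"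
        using d[of m "Suc m" n] unfolding zz_def by simp
      also have "\<dots> \<le> (1/2)^M" by (rule half_pow_mono) (use hr[of m] mn in auto)
      finally show "dist (zz y \<gamma> m) (zz y \<gamma> n) < e" using M by simp
    qed
  qed
  then show lim: "zz y \<gamma> \<longlonglongrightarrow> hl y \<gamma>"
    unfolding hl_def by (simp add: Cauchy_convergent_iff convergent_LIMSEQ_iff)
  fix i j :: nat assume ij: "i < j"
  have "(\<lambda>n. dist (y {\<gamma> i, \<gamma> j}) (zz y \<gamma> n)) \<longlonglongrightarrow> dist (y {\<gamma> i, \<gamma> j}) (hl y \<gamma>)"
    by (intro tendsto_intros lim)
  moreover have "\<exists>N. \<forall>n\<ge>N. dist (y {\<gamma> i, \<gamma> j}) (zz y \<gamma> n) \<le> (1/2)^(\<rho> i j)"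
  proof (intro exI allI impI)
    fix n assume "\<rho> i j \<le> n"
    then show "dist (y {\<gamma> i, \<gamma> j}) (zz y \<gamma> n) \<le> (1/2)^(\<rho> i j)" using d[OF ij, of n] by (simp add: min_def)
  qed
  ultimately show "dist (y {\<gamma> i, \<gamma> j}) (hl y \<gamma>) \<le> (1/2)^(\<rho> i j)"
    by (rule LIMSEQ_le_const2)
qed

lemma Pc_intro:
  fixes y :: "nat set \<Rightarrow> 'a::complete_space"
  assumes hr: "\<And>n. n \<le> \<rho> n (Suc n)" and sm: "strict_mono \<gamma>"
    and b: "\<And>i j. i < j \<Longrightarrow> dist (y {\<gamma> i, \<gamma> j}) \<eta> \<le> (1/2)^(Suc (\<rho> i j))"
  shows "Pc \<rho> y \<gamma>" "hl y \<gamma> = \<eta>"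
proof -
  show "Pc \<rho> y \<gamma>" unfolding Pc_def
  proof (intro conjI sm allI impI)
    fix i j k l :: nat assume "i < j" "k < l"
    then have b1: "dist (y {\<gamma> i, \<gamma> j}) \<eta> \<le> (1/2)^(Suc (min (\<rho> i j) (\<rho> k l)))"
      and b2: "dist (y {\<gamma> k, \<gamma> l}) \<eta> \<le> (1/2)^(Suc (min (\<rho> i j) (\<rho> k l)))"
      using b[of i j] b[of k l] half_pow_mono[of "Suc (min (\<rho> i j) (\<rho> k l))"] by (meson Suc_le_mono min.cobounded1 min.cobounded2 order_trans)+
    have "dist (y {\<gamma> i, \<gamma> j}) (y {\<gamma> k, \<gamma> l}) \<le> dist (y {\<gamma> i, \<gamma> j}) \<eta> + dist (y {\<gamma> k, \<gamma> l}) \<eta>"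
      by (rule dist_triangle2)
    also have "\<dots> \<le> 2 * (1/2)^(Suc (min (\<rho> i j) (\<rho> k l)))" using b1 b2 by simp
    also have "\<dots> = (1/2)^(min (\<rho> i j) (\<rho> k l))" by simp
    finally show "dist (y {\<gamma> i, \<gamma> j}) (y {\<gamma> k, \<gamma> l}) \<le> (1/2)^(min (\<rho> i j) (\<rho> k l))" .
  qed
  have "zz y \<gamma> \<longlonglongrightarrow> \<eta>"
  proof (rule metric_LIMSEQ_I)
    fix e :: real assume "e > 0"
    then obtain M where M: "(1/2::real)^M < e" using half_pow_small by blast
    show "\<exists>M. \<forall>n\<ge>M. dist (zz y \<gamma> n) \<eta> < e"
    proof (intro exI allI impI)
      fix n assume "M \<le> n"
      have "dist (zz y \<gamma> n) \<eta> \<le> (1/2)^(Suc (\<rho> n (Suc n)))" unfolding zz_def by (rule b) simp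
      also have "\<dots> \<le> (1/2)^M" by (rule half_pow_mono) (use hr[of n] \<open>M \<le> n\<close> in auto)
      finally show "dist (zz y \<gamma> n) \<eta> < e" using M by simp
    qed
  qed
  then show "hl y \<gamma> = \<eta>" unfolding hl_def by (rule limI)
qed



lemma Pc_closed:
  assumes "\<forall>n. \<exists>\<delta>\<in>{\<gamma>. Pc \<rho> y \<gamma>}. pre n \<delta> = pre n \<gamma>"
  shows "Pc \<rho> y \<gamma>"
proof -
  have ag: "\<exists>\<delta>. Pc \<rho> y \<delta> \<and> (\<forall>i<n. \<delta> i = \<gamma> i)" for n
    using assms pre_eq_iff by blast
  have "\<gamma> n < \<gamma> (Suc n)" for n
  proof -
    obtain \<delta> where d: "Pc \<rho> y \<delta>" "\<forall>i<Suc (Suc n). \<delta> i = \<gamma> i" using ag by blast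
    then have "\<delta> n < \<delta> (Suc n)" unfolding Pc_def strict_mono_Suc_iff by blast
    with d(2) show ?thesis by simp
  qed
  then have sm: "strict_mono \<gamma>" by (simp add: strict_mono_Suc_iff)
  show ?thesis unfolding Pc_def
  proof (intro conjI sm allI impI)
    fix i j k l :: nat assume ijkl: "i < j" "k < l"
    obtain \<delta> where d: "Pc \<rho> y \<delta>" "\<forall>i<Suc (j + l). \<delta> i = \<gamma> i" using ag by blast
    then have "dist (y {\<delta> i, \<delta> j}) (y {\<delta> k, \<delta> l}) \<le> (1/2)^(min (\<rho> i j) (\<rho> k l))"
      using ijkl unfolding Pc_def by blast
    moreover have "\<delta> i = \<gamma> i" "\<delta> j = \<gamma> j" "\<delta> k = \<gamma> k" "\<delta> l = \<gamma> l" using d(2) ijkl by auto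
    ultimately show "dist (y {\<gamma> i, \<gamma> j}) (y {\<gamma> k, \<gamma> l}) \<le> (1/2)^(min (\<rho> i j) (\<rho> k l))" by simp
  qed
qed

lemma Pc_modulus:
  fixes y :: "nat set \<Rightarrow> 'a::complete_space"
  assumes hr: "\<And>n. n \<le> \<rho> n (Suc n)" and e: "e > 0"
  shows "\<exists>N. \<forall>\<gamma>\<in>{\<gamma>. Pc \<rho> y \<gamma>}. \<forall>\<delta>\<in>{\<gamma>. Pc \<rho> y \<gamma>}. pre N \<gamma> = pre N \<delta> \<longrightarrow> dist (hl y \<gamma>) (hl y \<delta>) < e"
proof -
  obtain n where n: "(1/2::real)^n < e/2" using half_pow_small[of "e/2"] e by auto
  show ?thesis
  proof (intro exI[of _ "Suc (Suc n)"] ballI impI)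
    fix \<gamma> \<delta> assume g: "\<gamma> \<in> {\<gamma>. Pc \<rho> y \<gamma>}" and d: "\<delta> \<in> {\<gamma>. Pc \<rho> y \<gamma>}"
      and eq: "pre (Suc (Suc n)) \<gamma> = pre (Suc (Suc n)) \<delta>"
    have "\<gamma> n = \<delta> n" "\<gamma> (Suc n) = \<delta> (Suc n)" using eq unfolding pre_eq_iff by auto
    then have zeq: "zz y \<gamma> n = zz y \<delta> n" unfolding zz_def by simp
    have b: "dist (zz y \<gamma> n) (hl y \<gamma>) \<le> (1/2)^n" if "Pc \<rho> y \<gamma>" for \<gamma>
    proof -
      have "dist (zz y \<gamma> n) (hl y \<gamma>) \<le> (1/2)^(\<rho> n (Suc n))"
        unfolding zz_def by (rule Pc_lim(2)[OF hr that]) simp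
      also have "\<dots> \<le> (1/2)^n" by (rule half_pow_mono[OF hr])
      finally show ?thesis .
    qed
    have "dist (hl y \<gamma>) (hl y \<delta>) \<le> dist (zz y \<gamma> n) (hl y \<gamma>) + dist (zz y \<gamma> n) (hl y \<delta>)"
      by (rule dist_triangle3)
    also have "\<dots> \<le> (1/2)^n + (1/2)^n" using b[of \<gamma>] b[of \<delta>] g d zeq by (intro add_mono) auto
    also have "\<dots> < e" using n by simp
    finally show "dist (hl y \<gamma>) (hl y \<delta>) < e" .
  qed
qed

lemma Pc_analytic:
  fixes y :: "nat set \<Rightarrow> 'a::complete_space"
  assumes hr: "\<And>n. n \<le> \<rho> n (Suc n)"
  shows "analytic_set (hl y ` {\<gamma>. Pc \<rho> y \<gamma>})"
proof (cases "{\<gamma>. Pc \<rho> y \<gamma>} = {}")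
  case True then show ?thesis unfolding analytic_set_def by simp
next
  case False
  have "\<exists>g::(nat\<Rightarrow>nat)\<Rightarrow>'a. continuous_on UNIV g \<and> range g = hl y ` {\<gamma>. Pc \<rho> y \<gamma>}"
  proof (rule retract_image[OF False])
    fix \<gamma> assume "\<forall>n. \<exists>\<delta>\<in>{\<gamma>. Pc \<rho> y \<gamma>}. pre n \<delta> = pre n \<gamma>"
    then show "\<gamma> \<in> {\<gamma>. Pc \<rho> y \<gamma>}" using Pc_closed by blast
  next
    fix e :: real assume "e > 0"
    then show "\<exists>N. \<forall>\<gamma>\<in>{\<gamma>. Pc \<rho> y \<gamma>}. \<forall>\<delta>\<in>{\<gamma>. Pc \<rho> y \<gamma>}. pre N \<gamma> = pre N \<delta> \<longrightarrow> dist (hl y \<gamma>) (hl y \<delta>) < e"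
      by (rule Pc_modulus[where \<rho>=\<rho>, OF hr])
  qed
  then show ?thesis unfolding analytic_set_def by blast
qed



fun enumb :: "nat set \<Rightarrow> (nat \<Rightarrow> nat) \<Rightarrow> nat \<Rightarrow> nat" where
  "enumb D B 0 = (SOME d. d \<in> D \<and> B 0 < d)"
| "enumb D B (Suc m) = (SOME d. d \<in> D \<and> max (B (Suc m)) (enumb D B m) < d)"

lemma enum_above:
  fixes B :: "nat \<Rightarrow> nat"
  assumes "infinite (D::nat set)"
  shows "\<exists>\<gamma>. strict_mono \<gamma> \<and> (\<forall>m. \<gamma> m \<in> D \<and> B m < \<gamma> m)"
proof -
  have ex: "\<exists>d. d \<in> D \<and> b < d" for b using assms unfolding infinite_nat_iff_unbounded by blast
  have e0: "enumb D B 0 \<in> D \<and> B 0 < enumb D B 0"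
    unfolding enumb.simps by (rule someI_ex[OF ex])
  have eS: "enumb D B (Suc m) \<in> D \<and> max (B (Suc m)) (enumb D B m) < enumb D B (Suc m)" for m
    unfolding enumb.simps(2) by (rule someI_ex[OF ex])
  have "\<forall>m. enumb D B m \<in> D \<and> B m < enumb D B m"
  proof
    fix m show "enumb D B m \<in> D \<and> B m < enumb D B m" using e0 eS by (cases m) auto
  qed
  moreover have "strict_mono (enumb D B)" unfolding strict_mono_Suc_iff using eS by auto
  ultimately show ?thesis by blast
qed

lemma pair_cases_lt:
  fixes \<gamma> :: "nat \<Rightarrow> nat"
  assumes "s \<in> pairs2 (range \<gamma>)"
  obtains i j where "i < j" "s = {\<gamma> i, \<gamma> j}"
proof -
  obtain i j where "s = {\<gamma> i, \<gamma> j}" "\<gamma> i \<noteq> \<gamma> j" using assms by (auto simp: pairs2_iff)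
  then have "i \<noteq> j" by auto
  then show ?thesis
  proof (cases "i < j")
    case True then show ?thesis using that \<open>s = {\<gamma> i, \<gamma> j}\<close> by blast
  next
    case False then have "j < i" using \<open>i \<noteq> j\<close> by simp
    then show ?thesis using that \<open>s = {\<gamma> i, \<gamma> j}\<close> by (metis insert_commute)
  qed
qed

lemma r_forward:
  fixes y :: "nat set \<Rightarrow> 'a::complete_space"
  assumes P: "Pc (\<lambda>i j. i) y \<gamma>"
  shows "hl y \<gamma> \<in> r_limit_points y"
proof -
  have sm: "strict_mono \<gamma>" using P unfolding Pc_def by blast
  then have inf: "infinite (range \<gamma>)" using range_inj_infinite strict_mono_imp_inj_on by blast
  have bd: "dist (y {\<gamma> i, \<gamma> j}) (hl y \<gamma>) \<le> (1/2)^i" if "i < j" for i j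
    using Pc_lim(2)[of "\<lambda>i j. i", OF _ P that] by simp
  have "rconv y (range \<gamma>) (hl y \<gamma>)" unfolding rconv_def
  proof (intro allI impI)
    fix U assume U: "open U \<and> hl y \<gamma> \<in> U"
    then obtain e where e: "e > 0" "ball (hl y \<gamma>) e \<subseteq> U" using openE by metis
    obtain N where N: "(1/2::real)^N < e" using half_pow_small[OF e(1)] by blast
    have "\<forall>s\<in>pairs2 (range \<gamma> - \<gamma> ` {..<N}). y s \<in> U"
    proof
      fix s assume s: "s \<in> pairs2 (range \<gamma> - \<gamma> ` {..<N})"
      then have "s \<in> pairs2 (range \<gamma>)" using pairs2_mono[of "range \<gamma> - \<gamma> ` {..<N}" "range \<gamma>"] by blast
      then obtain i j where ij: "i < j" "s = {\<gamma> i, \<gamma> j}" by (rule pair_cases_lt)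
      then have "\<gamma> i \<notin> \<gamma> ` {..<N}" using s unfolding pairs2_def by auto
      then have "N \<le> i" by (metis lessThan_iff not_le imageI)
      then have hp: "(1/2::real)^i \<le> (1/2)^N" by (rule half_pow_mono)
      have "dist (y {\<gamma> i, \<gamma> j}) (hl y \<gamma>) < e" using bd[OF ij(1)] N hp by linarith
      then have "dist (y s) (hl y \<gamma>) < e" using ij(2) by simp
      then show "y s \<in> U" using e(2) by (auto simp: dist_commute)
    qed
    then show "\<exists>K. finite K \<and> (\<forall>s\<in>pairs2 (range \<gamma> - K). y s \<in> U)" by blast
  qed
  then show ?thesis unfolding r_limit_points_alt using inf by blast
qed

lemma R_forward:
  fixes y :: "nat set \<Rightarrow> 'a::complete_space"
  assumes P: "Pc (\<lambda>i j. j) y \<gamma>"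
  shows "hl y \<gamma> \<in> R_limit_points y"
proof -
  have sm: "strict_mono \<gamma>" using P unfolding Pc_def by blast
  then have inf: "infinite (range \<gamma>)" using range_inj_infinite strict_mono_imp_inj_on by blast
  have bd: "dist (y {\<gamma> i, \<gamma> j}) (hl y \<gamma>) \<le> (1/2)^j" if "i < j" for i j
    using Pc_lim(2)[of "\<lambda>i j. j", OF _ P that] by simp
  have "fconv y (range \<gamma>) (hl y \<gamma>)" unfolding fconv_def
  proof (intro allI impI)
    fix U assume U: "open U \<and> hl y \<gamma> \<in> U"
    then obtain e where e: "e > 0" "ball (hl y \<gamma>) e \<subseteq> U" using openE by metis
    obtain N where N: "(1/2::real)^N < e" using half_pow_small[OF e(1)] by blast
    have "{s\<in>pairs2 (range \<gamma>). y s \<notin> U} \<subseteq> pairs2 (\<gamma> ` {..<N})"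
    proof
      fix s assume s: "s \<in> {s\<in>pairs2 (range \<gamma>). y s \<notin> U}"
      then obtain i j where ij: "i < j" "s = {\<gamma> i, \<gamma> j}" by (blast elim: pair_cases_lt)
      have "j < N"
      proof (rule ccontr)
        assume "\<not> j < N"
        then have hp: "(1/2::real)^j \<le> (1/2)^N" by (intro half_pow_mono) simp
        have "dist (y {\<gamma> i, \<gamma> j}) (hl y \<gamma>) < e" using bd[OF ij(1)] N hp by linarith
        then have "dist (y s) (hl y \<gamma>) < e" using ij(2) by simp
        then have "y s \<in> U" using e(2) by (auto simp: dist_commute)
        with s show False by blast
      qed
      then have "i < N" using ij by simp
      moreover have "\<gamma> i \<noteq> \<gamma> j" using ij(1) strict_mono_imp_inj_on[OF sm] by (metis less_irrefl inj_on_eq_iff UNIV_I)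
      ultimately show "s \<in> pairs2 (\<gamma> ` {..<N})" using \<open>j < N\<close> ij(2) unfolding pairs2_iff by blast
    qed
    then show "finite {s\<in>pairs2 (range \<gamma>). y s \<notin> U}"
      by (rule finite_subset) (simp add: finite_pairs2)
  qed
  then show ?thesis unfolding R_limit_points_alt using inf by blast
qed



lemma Max_bound: "finite K \<Longrightarrow> x \<in> K \<Longrightarrow> x \<le> Max (insert (0::nat) K)"
  by simp

lemma r_backward:
  fixes y :: "nat set \<Rightarrow> 'a::complete_space"
  assumes "\<eta> \<in> r_limit_points y"
  shows "\<eta> \<in> hl y ` {\<gamma>. Pc (\<lambda>i j. i) y \<gamma>}"
proof -
  obtain D where D: "infinite D" "rconv y D \<eta>" using assms unfolding r_limit_points_alt by blast
  have "\<forall>m. \<exists>K. finite K \<and> (\<forall>s\<in>pairs2 (D - K). y s \<in> ball \<eta> ((1/2)^(Suc m)))"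
  proof
    fix m :: nat
    have "open (ball \<eta> ((1/2)^(Suc m)))" "\<eta> \<in> ball \<eta> ((1/2)^(Suc m))" by simp_all
    then show "\<exists>K. finite K \<and> (\<forall>s\<in>pairs2 (D - K). y s \<in> ball \<eta> ((1/2)^(Suc m)))"
      using D(2) unfolding rconv_def by blast
  qed
  then obtain K where K: "\<And>m. finite (K m)" "\<And>m. \<forall>s\<in>pairs2 (D - K m). y s \<in> ball \<eta> ((1/2)^(Suc m))"
    by metis
  define B where "B m = Max (insert 0 (K m))" for m
  obtain \<gamma> where g: "strict_mono \<gamma>" "\<And>m. \<gamma> m \<in> D" "\<And>m. B m < \<gamma> m"
    using enum_above[OF D(1), of B] by blast
  have bd: "dist (y {\<gamma> i, \<gamma> j}) \<eta> \<le> (1/2)^(Suc i)" if ij: "i < j" for i j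
  proof -
    have lt: "\<gamma> i < \<gamma> j" using g(1) ij by (simp add: strict_mono_less)
    have kb: "x \<le> B i" if "x \<in> K i" for x unfolding B_def using Max_bound[OF K(1)[of i] that] .
    have n1: "\<gamma> i \<notin> K i"
    proof
      assume "\<gamma> i \<in> K i" then have "\<gamma> i \<le> B i" by (rule kb)
      with g(3)[of i] show False by simp
    qed
    have n2: "\<gamma> j \<notin> K i"
    proof
      assume "\<gamma> j \<in> K i" then have "\<gamma> j \<le> B i" by (rule kb)
      with g(3)[of i] lt show False by linarith
    qed
    have "{\<gamma> i, \<gamma> j} \<in> pairs2 (D - K i)" unfolding pairs2_iff
      by (rule exI[of _ "\<gamma> i"], rule exI[of _ "\<gamma> j"]) (use n1 n2 g(2)[of i] g(2)[of j] lt in auto)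
    then have "y {\<gamma> i, \<gamma> j} \<in> ball \<eta> ((1/2)^(Suc i))" using K(2) by blast
    then show ?thesis by (simp add: dist_commute del: power_Suc)
  qed
  have "Pc (\<lambda>i j. i) y \<gamma>" "hl y \<gamma> = \<eta>"
    using Pc_intro[of "\<lambda>i j. i" \<gamma> y \<eta>, OF _ g(1)] bd by auto
  then show ?thesis by blast
qed

lemma R_backward:
  fixes y :: "nat set \<Rightarrow> 'a::complete_space"
  assumes "\<eta> \<in> R_limit_points y"
  shows "\<eta> \<in> hl y ` {\<gamma>. Pc (\<lambda>i j. j) y \<gamma>}"
proof -
  obtain D where D: "infinite D" "fconv y D \<eta>" using assms unfolding R_limit_points_alt by blast
  define F where "F m = {s\<in>pairs2 D. y s \<notin> ball \<eta> ((1/2)^(Suc m))}" for m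
  have fF: "finite (F m)" for m
  proof -
    have "open (ball \<eta> ((1/2)^(Suc m)))" "\<eta> \<in> ball \<eta> ((1/2)^(Suc m))" by simp_all
    then show ?thesis using D(2) unfolding fconv_def F_def by blast
  qed
  have fU: "finite (\<Union>(F m))" for m
  proof -
    have "\<forall>s\<in>F m. finite s" unfolding F_def by (auto simp: pairs2_iff)
    then show ?thesis using fF[of m] by blast
  qed
  define B where "B m = Max (insert 0 (\<Union>(F m)))" for m
  obtain \<gamma> where g: "strict_mono \<gamma>" "\<And>m. \<gamma> m \<in> D" "\<And>m. B m < \<gamma> m"
    using enum_above[OF D(1), of B] by blast
  have bd: "dist (y {\<gamma> i, \<gamma> j}) \<eta> \<le> (1/2)^(Suc j)" if ij: "i < j" for i j
  proof -
    have lt: "\<gamma> i < \<gamma> j" using g(1) ij by (simp add: strict_mono_less)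
    have inD: "{\<gamma> i, \<gamma> j} \<in> pairs2 D" unfolding pairs2_iff
      by (rule exI[of _ "\<gamma> i"], rule exI[of _ "\<gamma> j"]) (use g(2)[of i] g(2)[of j] lt in auto)
    have "{\<gamma> i, \<gamma> j} \<notin> F j"
    proof
      assume "{\<gamma> i, \<gamma> j} \<in> F j"
      then have "\<gamma> j \<in> \<Union>(F j)" by blast
      then have "\<gamma> j \<le> B j" unfolding B_def using Max_bound[OF fU] by blast
      with g(3)[of j] show False by simp
    qed
    then have "y {\<gamma> i, \<gamma> j} \<in> ball \<eta> ((1/2)^(Suc j))" using inD unfolding F_def by blast
    then show ?thesis by (simp add: dist_commute del: power_Suc)
  qed
  have "Pc (\<lambda>i j. j) y \<gamma>" "hl y \<gamma> = \<eta>"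
    using Pc_intro[of "\<lambda>i j. j" \<gamma> y \<eta>, OF _ g(1)] bd by auto
  then show ?thesis by blast
qed

lemma r_analytic:
  fixes y :: "nat set \<Rightarrow> 'a::complete_space"
  shows "analytic_set (r_limit_points y)"
proof -
  have "r_limit_points y = hl y ` {\<gamma>. Pc (\<lambda>i j. i) y \<gamma>}"
    using r_backward r_forward by blast
  then show ?thesis using Pc_analytic[of "\<lambda>i j. i" y] by simp
qed

lemma R_analytic:
  fixes y :: "nat set \<Rightarrow> 'a::complete_space"
  shows "analytic_set (R_limit_points y)"
proof -
  have "R_limit_points y = hl y ` {\<gamma>. Pc (\<lambda>i j. j) y \<gamma>}"
    using R_backward R_forward by blast
  then show ?thesis using Pc_analytic[of "\<lambda>i j. j" y] by simp
qed


theorem theorem4p2: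
  assumes "uncountable (UNIV :: 'a::polish_space set)"
  shows "(L_r :: 'a set set) = L_R \<and> (L_R :: 'a set set) = {A. analytic_set A} \<and>
    (\<forall>C :: 'a set. analytic_set C \<and> C \<noteq> {} \<longrightarrow>
       (\<exists>y. C = r_limit_points y \<and> C = R_limit_points y))"
proof -
  have ex: "\<exists>y. C = r_limit_points y \<and> C = R_limit_points y"
    if hC: "analytic_set C" "C \<noteq> {}" for C :: "'a set"
  proof -
    obtain f :: "(nat \<Rightarrow> nat) \<Rightarrow> 'a" where f: "continuous_on UNIV f" "range f = C"
      using hC unfolding analytic_set_def by blast
    show ?thesis using part1[OF f(1)] f(2) by metis
  qed
  have e: "analytic_set ({} :: 'a set)" unfolding analytic_set_def by simp
  have r: "(L_r :: 'a set set) = {A. analytic_set A}"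
  proof
    show "(L_r :: 'a set set) \<subseteq> {A. analytic_set A}"
      unfolding L_r_def using r_analytic e by blast
    show "{A. analytic_set A} \<subseteq> (L_r :: 'a set set)"
    proof
      fix A :: "'a set" assume "A \<in> {A. analytic_set A}"
      then show "A \<in> L_r" unfolding L_r_def using ex[of A] by (cases "A = {}") auto
    qed
  qed
  have R: "(L_R :: 'a set set) = {A. analytic_set A}"
  proof
    show "(L_R :: 'a set set) \<subseteq> {A. analytic_set A}"
      unfolding L_R_def using R_analytic e by blast
    show "{A. analytic_set A} \<subseteq> (L_R :: 'a set set)"
    proof
      fix A :: "'a set" assume "A \<in> {A. analytic_set A}"
      then show "A \<in> L_R" unfolding L_R_def using ex[of A] by (cases "A = {}") auto
    qed
  qed
  show ?thesis using r R ex by blast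
qed

end
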